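(* For each $s\in\{2,3,4\}$ we have $L_s(r)>0$ for all real $r\in(2,\infty)$. Furthermore, for $s\in\{3,4\}$ we also have $L_s(2)>0$.
   Context: For an integer $s\ge2$ and real $r\ge2$ (with $rs-r-s>0$), define \[ L_s(r)=L(r,s)=\frac rs\log(s-1)+(r-1)\log(r-1)-\frac{rs-r-s}{s}\log r-\frac{rs-r-s}{s(s-1)}\log(rs-r-s). \] *)

theory Defs
  imports Complex_Main
begin

definition L :: "real \<Rightarrow> nat \<Rightarrow> real" where
  "L r s = r / real s * ln (real s - 1) + (r - 1) * ln (r - 1)
     - (r * real s - r - real s) / real s * ln r
     - (r * real s - r - real s) / (real s * (real s - 1)) * ln (r * real s - r - real s)"

end

theory Submission
  imports Defs
begin

lemma ln_bnd: fixes u::real assumes "u \<ge> 0" shows "ln (1+u) \<le> u*(2+u)/(2*(1+u))"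
proof -
  define f where "f = (\<lambda>u::real. u*(2+u)/(2*(1+u)) - ln (1+u))"
  have "f 0 \<le> f u"
  proof (cases "u = 0")
    case False
    show ?thesis
    proof (rule DERIV_nonneg_imp_nondecreasing[of 0 u f])
      show "0 \<le> u" using assms by simp
      fix x assume x: "0 \<le> x" "x \<le> u"
      have d: "(f has_real_derivative (x^2/(2*(1+x)^2))) (at x)"
        unfolding f_def using x
        apply (auto intro!: derivative_eq_intros)
        apply (subgoal_tac "1+x > 0")
        apply (simp add: divide_simps power2_eq_square)
        apply (simp add: algebra_simps)
        apply simp
        done
      show "\<exists>y. (f has_real_derivative y) (at x) \<and> 0 \<le> y"
        using d by (intro exI[of _ "x^2/(2*(1+x)^2)"]) simp
    qed
  qed simp
  then show ?thesis by (simp add: f_def)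
qed

lemma key: fixes s r :: real assumes s: "s = 3 \<or> s = 4" and r: "r \<ge> 2"
  shows "ln (s-1) + s * ln (r-1) + s - 1 - (s-1) * ln r - (r*s-r-s)/r - ln (r*s-r-s) > 0"
proof -
  define m where "m = r*s-r-s"
  have mpos: "m > 0" using s r unfolding m_def by auto
  have A0: "ln (m/((s-1)*(r-1))) \<le> m/((s-1)*(r-1)) - 1"
    by (rule ln_le_minus_one) (use mpos s r in auto)
  have A: "ln m \<le> ln(s-1) + ln(r-1) + m/((s-1)*(r-1)) - 1"
  proof -
    have p1: "s-1 > 0" "r-1>0" using s r by auto
    have "ln((s-1)*(r-1)) = ln(s-1)+ln(r-1)" using p1 by (intro ln_mult_pos) auto
    moreover have "ln(m/((s-1)*(r-1))) = ln m - ln((s-1)*(r-1))" using mpos p1 by (intro ln_divide_pos) auto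
    ultimately show ?thesis using A0 by linarith
  qed
  define u where "u = 1/(r-1)"
  have u0: "u \<ge> 0" using r by (simp add: u_def)
  have "1 + u = r/(r-1)" using r by (simp add: u_def field_simps)
  hence B0: "ln r - ln (r-1) \<le> u*(2+u)/(2*(1+u))" using ln_bnd[OF u0] r by (simp add: ln_div)
  have B: "ln r - ln (r-1) \<le> (2*r-1)/(2*r*(r-1))"
  proof -
    have "u*(2+u)/(2*(1+u)) = (2*r-1)/(2*r*(r-1))"
      using r unfolding u_def by (simp add: divide_simps)
    thus ?thesis using B0 by simp
  qed
  have rne: "r \<noteq> 0" "r - 1 \<noteq> 0" using r by auto
  have C: "(s-1)*((2*r-1)/(2*r*(r-1))) + m/r + m/((s-1)*(r-1)) < s"
    using s
  proof
    assume s3: "s = 3"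
    have e: "(s-1)*((2*r-1)/(2*r*(r-1))) + m/r + m/((s-1)*(r-1)) = (6*r^2-9*r+4)/(2*r*(r-1))"
      using rne unfolding m_def s3 by (simp add: divide_simps power2_eq_square; simp add: algebra_simps)
    have "(6*r^2-9*r+4) < 3*(2*r*(r-1))" using r by (simp add: algebra_simps power2_eq_square)
    hence "(6*r^2-9*r+4)/(2*r*(r-1)) < 3" using r by (simp add: pos_divide_less_eq)
    thus ?thesis using e s3 by simp
  next
    assume s4: "s = 4"
    have e: "(s-1)*((2*r-1)/(2*r*(r-1))) + m/r + m/((s-1)*(r-1)) = (24*r^2-32*r+15)/(6*r*(r-1))"
      using rne unfolding m_def s4 by (simp add: divide_simps power2_eq_square; simp add: algebra_simps)
    have "(24*r^2-32*r+15) < 4*(6*r*(r-1))" using r by (simp add: algebra_simps power2_eq_square)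
    hence "(24*r^2-32*r+15)/(6*r*(r-1)) < 4" using r by (simp add: pos_divide_less_eq)
    thus ?thesis using e s4 by simp
  qed
  have "(s-1)*(ln r - ln(r-1)) \<le> (s-1)*((2*r-1)/(2*r*(r-1)))"
    using B s by (intro mult_left_mono) auto
  then show ?thesis using A C unfolding m_def[symmetric] by (simp add: algebra_simps)
qed

lemma derivL: fixes s::nat assumes s: "real s = 3 \<or> real s = 4" and x: "x \<ge> 2"
  shows "((\<lambda>r. L r s) has_real_derivative
     ((ln (real s-1) + real s * ln (x-1) + real s - 1 - (real s-1) * ln x - (x*real s-x-real s)/x - ln (x*real s-x-real s)) / real s)) (at x)"
proof -
  have p: "x*real s - x - real s > 0" "x > 0" "x - 1 > 0" "real s > 1" using s x by auto
  show ?thesis unfolding L_def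
    using p apply (auto intro!: derivative_eq_intros)
    apply (subgoal_tac "real s - 1 \<noteq> 0" "real s \<noteq> 0" "x \<noteq> 0")
    apply (simp add: field_simps)
    using p by auto
qed

lemma L2: "L 2 3 > 0" "L 2 4 > 0"
proof -
  show "L 2 3 > 0" by (simp add: L_def)
  have "ln (2^4::real) < ln (3^3)" by (subst ln_less_cancel_iff) auto
  hence "4 * ln (2::real) < 3 * ln 3" by (simp only: ln_realpow)
  thus "L 2 4 > 0" by (simp add: L_def)
qed

lemma L_s2: fixes r::real assumes r: "r > 2" shows "L r 2 > 0"
proof -
  have q: "(r-1)*(r-1) > 0" using r by simp
  have "ln (r*(r-2)) < ln ((r-1)^2)" using r q by (subst ln_less_cancel_iff) (auto simp: power2_eq_square algebra_simps)
  hence h: "ln r + ln (r-2) < 2 * ln (r-1)" using r by (simp add: ln_mult_pos ln_realpow)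
  have h2: "(r-2)/2 * (ln r + ln (r-2)) < (r-2)/2 * (2 * ln (r-1))"
    using h r by (intro mult_strict_left_mono) auto
  have h3: "(r-2)/2 * (2 * ln (r-1)) = (r-2) * ln(r-1)" by simp
  have h4: "(r-1)*ln(r-1) - (r-2)*ln(r-1) = ln(r-1)" by (simp add: algebra_simps)
  have c: "ln (r-1) > 0" using r by simp
  have e: "L r 2 = (r-1)*ln(r-1) - (r-2)/2*(ln r + ln(r-2))"
    by (simp add: L_def field_simps)
  show ?thesis using h2 h3 h4 c e by linarith
qed

lemma L_pos34: fixes s::nat and r::real assumes s: "s = 3 \<or> s = 4" and r: "r > 2"
  shows "L r s > 0"
proof -
  have sr: "real s = 3 \<or> real s = 4" using s by auto
  have "L 2 s < L r s"
  proof (rule DERIV_pos_imp_increasing[OF r])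
    fix x :: real assume x: "2 \<le> x" "x \<le> r"
    show "\<exists>y. ((\<lambda>r. L r s) has_real_derivative y) (at x) \<and> 0 < y"
      apply (rule exI, rule conjI, rule derivL[OF sr x(1)])
      using key[OF sr x(1)] sr by (auto intro!: divide_pos_pos)
  qed
  moreover have "L 2 s > 0" using s L2 by auto
  ultimately show ?thesis by linarith
qed

theorem lemma6p1:
  shows "(\<forall>s\<in>{2,3,4::nat}. \<forall>r::real. r > 2 \<longrightarrow> L r s > 0)
       \<and> (\<forall>s\<in>{3,4::nat}. L 2 s > 0)"
  using L_s2 L_pos34 L2 by auto

end
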